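(* Let $G$ be a nice graph, $V_4$ the set of vertices of degree at least four in $G$, $\mathcal{P}$ a path partition of $G$ of minimum size, and $\mathcal{P}_4\subseteq\mathcal{P}$ the subfamily of paths that visit at least one vertex of $V_4$. Then $\mathcal{P}_4$ is bull-free.
   Context: All graphs are finite, simple and undirected; subcubic means maximum degree at most $3$. A path partition of $G$ is a collection of pairwise edge-disjoint paths whose edge sets together cover $E(G)$. A pan cycle of $G$ is a cycle containing a unique vertex of degree $3$ in $G$, all its other vertices having degree $2$ in $G$. A bull cycle of $G$ is a cycle containing exactly two vertices of degree $3$ in $G$, all its other vertices having degree $2$ in $G$. A graph is nice if it is connected, not subcubic, has no pan cycles, and all its bull cycles are triangles. A bull triangle is a bull cycle of length three; its two degree-$3$ vertices form a bull-pair. A path is bull-free if its two endpoints do not form a bull-pair; a family of paths is bull-free if each of its paths is. *)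

theory Defs
  imports Main
begin

definition graph :: "'a set \<Rightarrow> 'a set set \<Rightarrow> bool" where
  "graph V E \<longleftrightarrow> finite V \<and> (\<forall>e\<in>E. \<exists>u v. e = {u, v} \<and> u \<noteq> v \<and> u \<in> V \<and> v \<in> V)"

definition degree :: "'a set set \<Rightarrow> 'a \<Rightarrow> nat" where
  "degree E v = card {e \<in> E. v \<in> e}"

definition adj :: "'a set set \<Rightarrow> 'a \<Rightarrow> 'a \<Rightarrow> bool" where
  "adj E u v \<longleftrightarrow> {u, v} \<in> E"

definition connected_graph :: "'a set \<Rightarrow> 'a set set \<Rightarrow> bool" where
  "connected_graph V E \<longleftrightarrow> V \<noteq> {} \<and> (\<forall>u\<in>V. \<forall>v\<in>V. (adj E)\<^sup>*\<^sup>* u v)"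

definition subcubic :: "'a set \<Rightarrow> 'a set set \<Rightarrow> bool" where
  "subcubic V E \<longleftrightarrow> (\<forall>v\<in>V. degree E v \<le> 3)"

definition walk_edges :: "'a list \<Rightarrow> 'a set set" where
  "walk_edges xs = {{xs ! i, xs ! Suc i} | i. Suc i < length xs}"

definition is_path :: "'a set \<Rightarrow> 'a set set \<Rightarrow> 'a list \<Rightarrow> bool" where
  "is_path V E xs \<longleftrightarrow> length xs \<ge> 2 \<and> distinct xs \<and> set xs \<subseteq> V \<and>
     (\<forall>i. Suc i < length xs \<longrightarrow> adj E (xs ! i) (xs ! Suc i))"

definition is_cycle :: "'a set \<Rightarrow> 'a set set \<Rightarrow> 'a list \<Rightarrow> bool" where
  "is_cycle V E xs \<longleftrightarrow> length xs \<ge> 3 \<and> distinct xs \<and> set xs \<subseteq> V \<and>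
     (\<forall>i. Suc i < length xs \<longrightarrow> adj E (xs ! i) (xs ! Suc i)) \<and>
     adj E (last xs) (hd xs)"

definition pan_cycle :: "'a set \<Rightarrow> 'a set set \<Rightarrow> 'a list \<Rightarrow> bool" where
  "pan_cycle V E xs \<longleftrightarrow> is_cycle V E xs \<and>
     card {v \<in> set xs. degree E v = 3} = 1 \<and>
     (\<forall>v\<in>set xs. degree E v = 2 \<or> degree E v = 3)"

definition bull_cycle :: "'a set \<Rightarrow> 'a set set \<Rightarrow> 'a list \<Rightarrow> bool" where
  "bull_cycle V E xs \<longleftrightarrow> is_cycle V E xs \<and>
     card {v \<in> set xs. degree E v = 3} = 2 \<and>
     (\<forall>v\<in>set xs. degree E v = 2 \<or> degree E v = 3)"

definition nice :: "'a set \<Rightarrow> 'a set set \<Rightarrow> bool" where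
  "nice V E \<longleftrightarrow> connected_graph V E \<and> \<not> subcubic V E \<and>
     (\<forall>xs. \<not> pan_cycle V E xs) \<and>
     (\<forall>xs. bull_cycle V E xs \<longrightarrow> length xs = 3)"

definition bull_pair :: "'a set \<Rightarrow> 'a set set \<Rightarrow> 'a \<Rightarrow> 'a \<Rightarrow> bool" where
  "bull_pair V E u v \<longleftrightarrow> (\<exists>xs. bull_cycle V E xs \<and> length xs = 3 \<and>
     u \<noteq> v \<and> u \<in> set xs \<and> v \<in> set xs \<and> degree E u = 3 \<and> degree E v = 3)"

definition bull_free_path :: "'a set \<Rightarrow> 'a set set \<Rightarrow> 'a list \<Rightarrow> bool" where
  "bull_free_path V E p \<longleftrightarrow> \<not> bull_pair V E (hd p) (last p)"

definition path_partition :: "'a set \<Rightarrow> 'a set set \<Rightarrow> 'a list set \<Rightarrow> bool" where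
  "path_partition V E P \<longleftrightarrow> finite P \<and> (\<forall>p\<in>P. is_path V E p) \<and>
     (\<forall>p\<in>P. \<forall>q\<in>P. p \<noteq> q \<longrightarrow> walk_edges p \<inter> walk_edges q = {}) \<and>
     (\<Union>p\<in>P. walk_edges p) = E"

definition min_path_partition :: "'a set \<Rightarrow> 'a set set \<Rightarrow> 'a list set \<Rightarrow> bool" where
  "min_path_partition V E P \<longleftrightarrow> path_partition V E P \<and>
     (\<forall>Q. path_partition V E Q \<longrightarrow> card P \<le> card Q)"

end

theory Submission
  imports Defs
begin

lemma walk_edges_Nil: "walk_edges [] = {}"
  unfolding walk_edges_def by simp

lemma walk_edges_single: "walk_edges [a] = {}"
  unfolding walk_edges_def by simp

lemma walk_edges_Cons2: "walk_edges (a # b # xs) = insert {a,b} (walk_edges (b # xs))"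
  unfolding walk_edges_def
proof (rule set_eqI, rule iffI)
  fix e assume "e \<in> {{(a # b # xs) ! i, (a # b # xs) ! Suc i} |i. Suc i < length (a # b # xs)}"
  then obtain i where i: "e = {(a # b # xs) ! i, (a # b # xs) ! Suc i}" "Suc i < length (a # b # xs)" by blast
  show "e \<in> insert {a, b} {{(b # xs) ! i, (b # xs) ! Suc i} |i. Suc i < length (b # xs)}"
  proof (cases i)
    case 0 then show ?thesis using i by simp
  next
    case (Suc j) then show ?thesis using i by auto
  qed
next
  fix e assume "e \<in> insert {a, b} {{(b # xs) ! i, (b # xs) ! Suc i} |i. Suc i < length (b # xs)}"
  then show "e \<in> {{(a # b # xs) ! i, (a # b # xs) ! Suc i} |i. Suc i < length (a # b # xs)}"
  proof
    assume "e = {a,b}" then show ?thesis by (auto intro!: exI[of _ 0])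
  next
    assume "e \<in> {{(b # xs) ! i, (b # xs) ! Suc i} |i. Suc i < length (b # xs)}"
    then obtain i where "e = {(b # xs) ! i, (b # xs) ! Suc i}" "Suc i < length (b # xs)" by blast
    then show ?thesis by (auto intro!: exI[of _ "Suc i"])
  qed
qed

lemma walk_edges_three: "walk_edges [a,b,c] = {{a,b},{b,c}}"
  by (simp add: walk_edges_Cons2 walk_edges_single)

lemma walk_edges_Cons: "xs \<noteq> [] \<Longrightarrow> walk_edges (a # xs) = insert {a, hd xs} (walk_edges xs)"
  by (cases xs) (auto simp: walk_edges_Cons2)

lemma walk_edges_sub_set: "e \<in> walk_edges q \<Longrightarrow> e \<subseteq> set q"
  unfolding walk_edges_def by auto

lemma walk_edges_path_E: "is_path V E q \<Longrightarrow> walk_edges q \<subseteq> E"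
  unfolding walk_edges_def is_path_def adj_def by auto

lemma card_walk_edges: "card (walk_edges q) \<le> length q - 1"
proof -
  have "walk_edges q = (\<lambda>i. {q ! i, q ! Suc i}) ` {..< length q - 1}"
    unfolding walk_edges_def by auto
  then show ?thesis by (metis card_image_le card_lessThan finite_lessThan)
qed

lemma core:
  assumes finE: "finite E"
    and PP: "path_partition V E P" and minP: "\<forall>Q. path_partition V E Q \<longrightarrow> card P \<le> card Q"
    and pP: "p \<in> P"
    and hu: "hd p = u" and lv: "last p = v" and uv: "u \<noteq> v"
    and Euv: "{u,v} \<in> E" and Euw: "{u,w} \<in> E" and Evw: "{v,w} \<in> E" and wV: "w \<in> V"
    and wu: "w \<noteq> u" and wv: "w \<noteq> v"
    and du: "degree E u = 3" and dv: "degree E v = 3" and dw: "degree E w = 2"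
    and x: "x \<in> set p" "4 \<le> degree E x"
  shows False
proof -
  have pathp: "is_path V E p" using PP pP unfolding path_partition_def by blast
  define n where "n = length p"
  have n2: "n \<ge> 2" and dp: "distinct p" and setp: "set p \<subseteq> V"
    and adjp: "\<And>i. Suc i < n \<Longrightarrow> {p ! i, p ! Suc i} \<in> E"
    using pathp unfolding is_path_def adj_def n_def by auto
  have p0: "p ! 0 = u" using hu n2 unfolding n_def by (cases p) auto
  have pl: "p ! (n - 1) = v" using lv n2 unfolding n_def by (subst last_conv_nth[symmetric]) auto
  have idx: "\<And>i j. i < n \<Longrightarrow> j < n \<Longrightarrow> p ! i = p ! j \<longleftrightarrow> i = j"
    using dp unfolding n_def by (simp add: nth_eq_iff_index_eq)
  have edges_w: "{e \<in> E. w \<in> e} = {{u,w},{v,w}}"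
  proof -
    have sub: "{{u,w},{v,w}} \<subseteq> {e \<in> E. w \<in> e}" using Euw Evw by auto
    have "card {{u,w},{v,w}} = 2" using uv wu wv by (auto simp: doubleton_eq_iff)
    moreover have "finite {e \<in> E. w \<in> e}" using finE by simp
    ultimately show ?thesis using card_subset_eq[OF _ sub] dw unfolding degree_def by simp
  qed
  have nbw: "\<And>y. {w, y} \<in> E \<Longrightarrow> y = u \<or> y = v"
  proof -
    fix y assume "{w,y} \<in> E"
    then have "{w,y} \<in> {e \<in> E. w \<in> e}" by simp
    then have "{w,y} \<in> {{u,w},{v,w}}" using edges_w by simp
    then show "y = u \<or> y = v" by (auto simp: doubleton_eq_iff)
  qed
  have xdeg: "x \<noteq> u" "x \<noteq> v" "x \<noteq> w" using x du dv dw by auto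
  have n3: "n \<ge> 3"
  proof (rule ccontr)
    assume "\<not> n \<ge> 3"
    then have "n = 2" using n2 by simp
    then have "set p = {p ! 0, p ! 1}" unfolding n_def
      by (auto simp: in_set_conv_nth less_Suc_eq numeral_2_eq_2)
    then show False using x xdeg p0 pl \<open>n = 2\<close> by auto
  qed
  have wnp: "w \<notin> set p"
  proof
    assume "w \<in> set p"
    then obtain i where i: "i < n" "p ! i = w" unfolding n_def by (metis in_set_conv_nth)
    have "i \<noteq> 0" proof assume "i = 0" then show False using i p0 wu by simp qed
    have "i \<noteq> n - 1" proof assume "i = n - 1" then show False using i pl wv by simp qed
    have e1: "{w, p ! (i - 1)} \<in> E" using adjp[of "i - 1"] i \<open>i \<noteq> 0\<close> by (simp add: insert_commute)
    have e2: "{w, p ! Suc i} \<in> E" using adjp[of i] i \<open>i \<noteq> n - 1\<close> by simp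
    have ne: "p ! (i - 1) \<noteq> p ! Suc i" using idx[of "i - 1" "Suc i"] i \<open>i \<noteq> n - 1\<close> by auto
    have A: "p ! (i - 1) = u"
    proof (rule ccontr)
      assume "p ! (i - 1) \<noteq> u"
      then have "p ! (i - 1) = v" using nbw[OF e1] by auto
      then have "i - 1 = n - 1" using idx[of "i - 1" "n - 1"] pl i by auto
      then show False using i \<open>i \<noteq> 0\<close> by auto
    qed
    then have "i - 1 = 0" using idx[of "i - 1" 0] p0 i by auto
    have "p ! Suc i = v" using nbw[OF e2] ne A by auto
    then have "Suc i = n - 1" using idx[of "Suc i" "n - 1"] pl i \<open>i \<noteq> n - 1\<close> by auto
    then have "n = 3" "i = 1" using \<open>i - 1 = 0\<close> \<open>i \<noteq> 0\<close> by auto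
    then have "set p = {p ! 0, p ! 1, p ! 2}" unfolding n_def
      by (auto simp: in_set_conv_nth less_Suc_eq numeral_3_eq_3 numeral_2_eq_2)
    then show False using x xdeg p0 pl i \<open>n = 3\<close> \<open>i = 1\<close> by auto
  qed
  define T where "T = {{u,v},{u,w},{v,w}}"
  define S where "S = {u,v,w}"
  have Tp: "T \<inter> walk_edges p = {}"
  proof -
    have "{u,w} \<notin> walk_edges p" "{v,w} \<notin> walk_edges p" using wnp walk_edges_sub_set by blast+
    moreover have "{u,v} \<notin> walk_edges p"
    proof
      assume "{u,v} \<in> walk_edges p"
      then obtain i where i: "{u,v} = {p ! i, p ! Suc i}" "Suc i < n" unfolding walk_edges_def n_def by blast
      then have "(p ! i = u \<and> p ! Suc i = v) \<or> (p ! i = v \<and> p ! Suc i = u)" by (auto simp: doubleton_eq_iff)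
      then show False
      proof
        assume "p ! i = u \<and> p ! Suc i = v"
        then have "i = 0" "Suc i = n - 1" using idx[of i 0] idx[of "Suc i" "n - 1"] p0 pl i by auto
        then show False using n3 by auto
      next
        assume "p ! i = v \<and> p ! Suc i = u"
        then have "i = n - 1" using idx[of i "n - 1"] pl i by auto
        then show False using i by auto
      qed
    qed
    ultimately show ?thesis unfolding T_def by auto
  qed
  define p1 where "p1 = p ! 1"
  define pk where "pk = p ! (n - 2)"
  have up1: "{u, p1} \<in> walk_edges p" unfolding walk_edges_def p1_def using p0 n3 n_def
    by (auto intro!: exI[of _ 0])
  have pkv: "{pk, v} \<in> walk_edges p" unfolding walk_edges_def pk_def using pl n3 n_def
    by (auto intro!: exI[of _ "n - 2"] simp: Suc_diff_Suc numeral_2_eq_2)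
  have p1v: "p1 \<noteq> v" using idx[of 1 "n - 1"] n3 pl unfolding p1_def by auto
  have pku: "pk \<noteq> u" using idx[of "n - 2" 0] n3 p0 unfolding pk_def by auto
  have p1w: "p1 \<noteq> w" using wnp n3 unfolding p1_def n_def by auto
  have pkw: "pk \<noteq> w" using wnp n3 unfolding pk_def n_def by auto
  have WE: "walk_edges p \<subseteq> E" using walk_edges_path_E[OF pathp] .
  have edges_u: "{e \<in> E. u \<in> e} = {{u,v},{u,w},{u,p1}}"
  proof -
    have sub: "{{u,v},{u,w},{u,p1}} \<subseteq> {e \<in> E. u \<in> e}" using Euv Euw up1 WE by auto
    have "card {{u,v},{u,w},{u,p1}} = 3" using uv wu wv p1v p1w by (auto simp: doubleton_eq_iff)
    moreover have "finite {e \<in> E. u \<in> e}" using finE by simp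
    ultimately show ?thesis using card_subset_eq[OF _ sub] du unfolding degree_def by simp
  qed
  have edges_v: "{e \<in> E. v \<in> e} = {{u,v},{v,w},{pk,v}}"
  proof -
    have sub: "{{u,v},{v,w},{pk,v}} \<subseteq> {e \<in> E. v \<in> e}" using Euv Evw pkv WE by auto
    have "card {{u,v},{v,w},{pk,v}} = 3" using uv wu wv pku pkw by (auto simp: doubleton_eq_iff)
    moreover have "finite {e \<in> E. v \<in> e}" using finE by simp
    ultimately show ?thesis using card_subset_eq[OF _ sub] dv unfolding degree_def by simp
  qed
  have cross: "\<And>a b. {a,b} \<in> E \<Longrightarrow> a \<in> S \<Longrightarrow> b \<notin> S \<Longrightarrow> {a,b} \<in> walk_edges p"
  proof -
    fix a b assume ab: "{a,b} \<in> E" "a \<in> S" "b \<notin> S"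
    then consider "a = u" | "a = v" | "a = w" unfolding S_def by blast
    then show "{a,b} \<in> walk_edges p"
    proof cases
      case 1
      then have "{a,b} \<in> {e \<in> E. u \<in> e}" using ab by simp
      then have "{a,b} \<in> {{u,v},{u,w},{u,p1}}" using edges_u by simp
      then show ?thesis using 1 ab up1 unfolding S_def by (auto simp: doubleton_eq_iff)
    next
      case 2
      then have "{a,b} \<in> {e \<in> E. v \<in> e}" using ab by simp
      then have "{a,b} \<in> {{u,v},{v,w},{pk,v}}" using edges_v by simp
      then show ?thesis using 2 ab pkv unfolding S_def by (auto simp: doubleton_eq_iff insert_commute)
    next
      case 3
      then have "{a,b} \<in> {e \<in> E. w \<in> e}" using ab by simp
      then have "{a,b} \<in> {{u,w},{v,w}}" using edges_w by simp
      then show ?thesis using 3 ab unfolding S_def by (auto simp: doubleton_eq_iff)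
    qed
  qed
  have disj: "\<And>q r. q \<in> P \<Longrightarrow> r \<in> P \<Longrightarrow> q \<noteq> r \<Longrightarrow> walk_edges q \<inter> walk_edges r = {}"
    using PP unfolding path_partition_def by blast
  have inT: "walk_edges q \<subseteq> T" if qP: "q \<in> P" and qp: "q \<noteq> p" and qT: "walk_edges q \<inter> T \<noteq> {}" for q
  proof -
    have qpath: "is_path V E q" using PP qP unfolding path_partition_def by blast
    have step: "q ! i \<in> S \<longleftrightarrow> q ! Suc i \<in> S" if "Suc i < length q" for i
    proof -
      have ein: "{q ! i, q ! Suc i} \<in> walk_edges q" unfolding walk_edges_def using that by blast
      then have eE: "{q ! i, q ! Suc i} \<in> E" using walk_edges_path_E[OF qpath] by blast
      have nin: "{q ! i, q ! Suc i} \<notin> walk_edges p" using disj[OF qP pP qp] ein by blast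
      show ?thesis
      proof
        assume "q ! i \<in> S" then show "q ! Suc i \<in> S" using cross[OF eE] nin by blast
      next
        assume "q ! Suc i \<in> S" then show "q ! i \<in> S" using cross[of "q ! Suc i" "q ! i"] eE nin
          by (metis insert_commute)
      qed
    qed
    have all: "\<forall>i. i < length q \<longrightarrow> (q ! i \<in> S \<longleftrightarrow> q ! 0 \<in> S)"
    proof
      fix i show "i < length q \<longrightarrow> (q ! i \<in> S \<longleftrightarrow> q ! 0 \<in> S)"
        by (induction i) (use step in auto)
    qed
    obtain e where e: "e \<in> walk_edges q" "e \<in> T" using qT by blast
    then obtain i where i: "e = {q ! i, q ! Suc i}" "Suc i < length q" unfolding walk_edges_def by blast
    have "q ! i \<in> S" using e(2) i(1) unfolding T_def S_def by auto
    then have "q ! 0 \<in> S" using all i by auto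
    then have setq: "set q \<subseteq> S" using all by (auto simp: in_set_conv_nth)
    have dq: "distinct q" using qpath unfolding is_path_def by blast
    show ?thesis
    proof
      fix f assume "f \<in> walk_edges q"
      then obtain j where j: "f = {q ! j, q ! Suc j}" "Suc j < length q" unfolding walk_edges_def by blast
      have "q ! j \<noteq> q ! Suc j" using dq j(2) by (simp add: nth_eq_iff_index_eq)
      moreover have "q ! j \<in> S" "q ! Suc j \<in> S" using setq j(2) by auto
      ultimately show "f \<in> T" using j(1) unfolding S_def T_def by (auto simp: insert_commute)
    qed
  qed
  define Q where "Q = {q \<in> P. walk_edges q \<inter> T \<noteq> {}}"
  have finP: "finite P" using PP unfolding path_partition_def by blast
  have pQ: "p \<notin> Q" using Tp unfolding Q_def by auto
  have QP: "Q \<subseteq> P" unfolding Q_def by auto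
  have finQ: "finite Q" using finP QP finite_subset by blast
  have cover: "(\<Union>q\<in>P. walk_edges q) = E" using PP unfolding path_partition_def by blast
  have TQ: "T \<subseteq> (\<Union>q\<in>Q. walk_edges q)"
  proof
    fix t assume t: "t \<in> T"
    then have "t \<in> E" unfolding T_def using Euv Euw Evw by auto
    then obtain q where "q \<in> P" "t \<in> walk_edges q" using cover by blast
    then show "t \<in> (\<Union>q\<in>Q. walk_edges q)" using t unfolding Q_def by blast
  qed
  have cardQ: "card Q \<ge> 2"
  proof (rule ccontr)
    assume "\<not> card Q \<ge> 2"
    moreover have "Q \<noteq> {}" using TQ unfolding T_def by auto
    ultimately have "card Q = 1" using finQ card_gt_0_iff[of Q] by linarith
    then obtain q where Qq: "Q = {q}" by (rule card_1_singletonE)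
    then have qP: "q \<in> P" and qT: "walk_edges q \<inter> T \<noteq> {}" unfolding Q_def by auto
    have qp: "q \<noteq> p" using pQ Qq by auto
    have sub: "T \<subseteq> walk_edges q" using TQ Qq by auto
    have qpath: "is_path V E q" using PP qP unfolding path_partition_def by blast
    have "walk_edges q \<subseteq> T" using inT[OF qP qp qT] .
    have setq: "set q \<subseteq> S"
    proof
      fix y assume "y \<in> set q"
      then obtain j where j: "j < length q" "q ! j = y" by (metis in_set_conv_nth)
      have lq: "length q \<ge> 2" using qpath unfolding is_path_def by blast
      show "y \<in> S"
      proof (cases "Suc j < length q")
        case True
        then have "{q ! j, q ! Suc j} \<in> T" using \<open>walk_edges q \<subseteq> T\<close> unfolding walk_edges_def by blast
        then show ?thesis using j unfolding T_def S_def by auto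
      next
        case False
        then have "j = Suc (j - 1)" "Suc (j - 1) < length q" using lq j by auto
        then have "{q ! (j - 1), q ! j} \<in> T" using \<open>walk_edges q \<subseteq> T\<close> unfolding walk_edges_def
          by (metis (mono_tags, lifting) mem_Collect_eq subsetD)
        then show ?thesis using j unfolding T_def S_def by auto
      qed
    qed
    have dq: "distinct q" using qpath unfolding is_path_def by blast
    have "length q \<le> 3"
    proof -
      have "length q = card (set q)" using dq by (simp add: distinct_card)
      also have "\<dots> \<le> card S" using setq by (intro card_mono) (auto simp: S_def)
      also have "\<dots> \<le> 3" unfolding S_def by (simp add: card_insert_le_m1)
      finally show ?thesis .
    qed
    then have "card (walk_edges q) \<le> 2" using card_walk_edges[of q] by simp
    moreover have "card T = 3" unfolding T_def using uv wu wv by (auto simp: doubleton_eq_iff)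
    moreover have "finite (walk_edges q)" using finE walk_edges_path_E[OF qpath] finite_subset by blast
    ultimately show False using card_mono[OF _ sub] by simp
  qed
  define P' where "P' = (P - insert p Q) \<union> {w # p, [w, v, u]}"
  have wpE: "walk_edges (w # p) = insert {u,w} (walk_edges p)"
  proof -
    have "p \<noteq> []" using n2 unfolding n_def by auto
    then show ?thesis using walk_edges_Cons[of p w] hu by (simp add: insert_commute)
  qed
  have wvuE: "walk_edges [w,v,u] = {{v,w},{u,v}}" by (simp add: walk_edges_three insert_commute)
  have pp': "path_partition V E P'"
    unfolding path_partition_def
  proof (intro conjI ballI impI)
    show "finite P'" unfolding P'_def using finP by auto
  next
    fix q assume "q \<in> P'"
    then consider "q \<in> P" | "q = w # p" | "q = [w,v,u]" unfolding P'_def by blast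
    then show "is_path V E q"
    proof cases
      case 1 then show ?thesis using PP unfolding path_partition_def by blast
    next
      case 2
      have "p \<noteq> []" using n2 unfolding n_def by auto
      then have "p = u # tl p" using hu by (metis list.collapse)
      have ad: "adj E ((w # p) ! i) ((w # p) ! Suc i)" if "Suc i < length (w # p)" for i
      proof (cases i)
        case 0 then show ?thesis using p0 Euw by (simp add: adj_def insert_commute)
      next
        case (Suc j) then show ?thesis using that pathp unfolding is_path_def by simp
      qed
      show ?thesis using 2 pathp wnp wV ad unfolding is_path_def by auto
    next
      case 3
      have "p \<noteq> []" using n2 unfolding n_def by auto
      then have uV: "u \<in> V" "v \<in> V" using setp hu lv hd_in_set last_in_set by blast+
      show ?thesis using 3 uV wV Euv Evw wu wv uv unfolding is_path_def adj_def
        by (auto simp: nth_Cons' insert_commute less_Suc_eq numeral_3_eq_3)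
    qed
  next
    fix q r assume q: "q \<in> P'" and r: "r \<in> P'" and qr: "q \<noteq> r"
    have old: "walk_edges s \<inter> T = {}" "walk_edges s \<inter> walk_edges p = {}"
      if "s \<in> P - insert p Q" for s
      using that disj[OF _ pP, of s] unfolding Q_def by auto
    have new: "walk_edges s \<subseteq> T \<union> walk_edges p" if "s \<in> {w # p, [w,v,u]}" for s
      using that wpE wvuE unfolding T_def by auto
    have nn: "walk_edges (w # p) \<inter> walk_edges [w,v,u] = {}"
      using wpE wvuE Tp uv wu wv unfolding T_def by (auto simp: doubleton_eq_iff)
    show "walk_edges q \<inter> walk_edges r = {}"
    proof (cases "q \<in> P - insert p Q")
      case qo: True
      show ?thesis
      proof (cases "r \<in> P - insert p Q")
        case True then show ?thesis using qo qr disj by blast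
      next
        case False then have "r \<in> {w # p, [w,v,u]}" using r unfolding P'_def by blast
        then show ?thesis using new[of r] old[OF qo] by blast
      qed
    next
      case qn: False
      then have qn': "q \<in> {w # p, [w,v,u]}" using q unfolding P'_def by blast
      show ?thesis
      proof (cases "r \<in> P - insert p Q")
        case True then show ?thesis using new[OF qn'] old[OF True] by blast
      next
        case False then have "r \<in> {w # p, [w,v,u]}" using r unfolding P'_def by blast
        then show ?thesis using qn' qr nn by (auto simp: Int_commute)
      qed
    qed
  next
    show "(\<Union>q\<in>P'. walk_edges q) = E"
    proof
      show "(\<Union>q\<in>P'. walk_edges q) \<subseteq> E"
        using cover wpE wvuE Euw Euv Evw WE unfolding P'_def by auto
    next
      show "E \<subseteq> (\<Union>q\<in>P'. walk_edges q)"
      proof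
        fix e assume "e \<in> E"
        then obtain r where r: "r \<in> P" "e \<in> walk_edges r" using cover by blast
        show "e \<in> (\<Union>q\<in>P'. walk_edges q)"
        proof (cases "r = p")
          case True then show ?thesis using r wpE unfolding P'_def by blast
        next
          case False
          show ?thesis
          proof (cases "r \<in> Q")
            case True
            then have "e \<in> T" using inT[OF r(1) False] r unfolding Q_def by blast
            then have "e \<in> walk_edges (w # p) \<or> e \<in> walk_edges [w,v,u]"
              using wpE wvuE unfolding T_def by auto
            then show ?thesis unfolding P'_def by blast
          next
            case False
            then show ?thesis using r \<open>r \<noteq> p\<close> unfolding P'_def by blast
          qed
        qed
      qed
    qed
  qed
  have "card P' \<le> card (P - insert p Q) + card {w # p, [w, v, u]}"
    unfolding P'_def by (rule card_Un_le)
  moreover have "card {w # p, [w, v, u]} \<le> 2" by (cases "w # p = [w, v, u]") auto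
  moreover have "card (P - insert p Q) = card P - (card Q + 1)"
    using finP QP pP pQ finQ by (simp add: card_Diff_subset)
  moreover have "card P \<ge> card Q + 1"
  proof -
    have "insert p Q \<subseteq> P" using QP pP by blast
    then have "card (insert p Q) \<le> card P" using finP by (rule card_mono[rotated])
    moreover have "card (insert p Q) = card Q + 1" using finQ pQ by simp
    ultimately show ?thesis by simp
  qed
  ultimately have "card P' < card P" using cardQ by linarith
  moreover have "card P \<le> card P'" using minP pp' by blast
  ultimately show False by simp
qed

theorem lemma10:
  fixes V :: "'a set" and E :: "'a set set" and P :: "'a list set"
  assumes "graph V E"
    and "nice V E"
    and "min_path_partition V E P"
  shows "\<forall>p \<in> {p \<in> P. \<exists>v \<in> set p. v \<in> V \<and> degree E v \<ge> 4}. bull_free_path V E p"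
proof
  fix p assume "p \<in> {p \<in> P. \<exists>v \<in> set p. v \<in> V \<and> degree E v \<ge> 4}"
  then have pP: "p \<in> P" and "\<exists>x\<in>set p. 4 \<le> degree E x" by auto
  then obtain x where x: "x \<in> set p" "4 \<le> degree E x" by blast
  have finE: "finite E"
  proof -
    have "E \<subseteq> Pow V"
    proof
      fix e assume "e \<in> E"
      then obtain y z where "e = {y,z}" "y \<in> V" "z \<in> V" using assms(1) unfolding graph_def by blast
      then show "e \<in> Pow V" by simp
    qed
    moreover have "finite V" using assms(1) unfolding graph_def by blast
    ultimately show ?thesis by (meson finite_Pow_iff finite_subset)
  qed
  have PP: "path_partition V E P" and minP: "\<forall>Q. path_partition V E Q \<longrightarrow> card P \<le> card Q"
    using assms(3) unfolding min_path_partition_def by blast+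
  show "bull_free_path V E p"
  proof (rule ccontr)
    assume "\<not> bull_free_path V E p"
    then have "bull_pair V E (hd p) (last p)" by (simp add: bull_free_path_def)
    then obtain xs where bc: "bull_cycle V E xs" "length xs = 3" and uv: "hd p \<noteq> last p"
      and uin: "hd p \<in> set xs" and vin: "last p \<in> set xs"
      and du: "degree E (hd p) = 3" and dv: "degree E (last p) = 3"
      unfolding bull_pair_def by blast
    define u where "u = hd p"
    define v where "v = last p"
    obtain a b c where xs: "xs = [a,b,c]" using bc(2)
      by (cases xs; cases "tl xs"; cases "tl (tl xs)") (auto simp: numeral_3_eq_3)
    have cyc: "is_cycle V E xs" and cnt: "card {y \<in> set xs. degree E y = 3} = 2"
      and dall: "\<forall>y\<in>set xs. degree E y = 2 \<or> degree E y = 3"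
      using bc(1) unfolding bull_cycle_def by blast+
    have dxs: "distinct [a,b,c]" and sV: "set [a,b,c] \<subseteq> V" using cyc xs unfolding is_cycle_def by blast+
    have aab: "adj E a b" using cyc xs unfolding is_cycle_def by (metis Suc_lessI length_Cons list.size(3) nth_Cons_0 nth_Cons_Suc numeral_3_eq_3 zero_less_Suc One_nat_def lessI)
    have abc: "adj E b c"
    proof -
      have "\<forall>i. Suc i < length xs \<longrightarrow> adj E (xs ! i) (xs ! Suc i)" using cyc unfolding is_cycle_def by blast
      then have "adj E (xs ! 1) (xs ! 2)" using xs by (metis One_nat_def Suc_1 length_Cons lessI list.size(3) numeral_3_eq_3)
      then show ?thesis using xs by (simp add: numeral_2_eq_2)
    qed
    have aca: "adj E c a" using cyc xs unfolding is_cycle_def by simp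
    have allE: "\<forall>y\<in>{a,b,c}. \<forall>z\<in>{a,b,c}. y \<noteq> z \<longrightarrow> {y,z} \<in> E"
      using aab abc aca unfolding adj_def by (auto simp: insert_commute)
    have sx: "set xs = {a,b,c}" using xs by simp
    have uS: "u \<in> {a,b,c}" "v \<in> {a,b,c}" using uin vin sx u_def v_def by auto
    have uv': "u \<noteq> v" using uv u_def v_def by simp
    have "\<exists>w. w \<in> {a,b,c} \<and> w \<noteq> u \<and> w \<noteq> v \<and> {a,b,c} = {u,v,w}"
      using uS uv' dxs
      apply (simp only: insert_iff empty_iff simp_thms)
      apply (elim disjE)
      apply (auto simp: insert_commute)
      done
    then obtain w where w: "w \<in> {a,b,c}" "w \<noteq> u" "w \<noteq> v" "{a,b,c} = {u,v,w}" by blast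
    have Euv: "{u,v} \<in> E" using allE[rule_format, OF uS(1) uS(2) uv'] .
    have Euw: "{u,w} \<in> E" using allE[rule_format, OF uS(1) w(1) w(2)[symmetric]] .
    have Evw: "{v,w} \<in> E" using allE[rule_format, OF uS(2) w(1) w(3)[symmetric]] .
    have wV: "w \<in> V" using sV w(1) by auto
    have dw: "degree E w = 2"
    proof -
      have "degree E w = 2 \<or> degree E w = 3" using dall w(1) unfolding sx by (rule bspec)
      moreover have "degree E w \<noteq> 3"
      proof
        assume "degree E w = 3"
        then have "{y \<in> set xs. degree E y = 3} = {u,v,w}" using sx w du dv u_def v_def
          by (auto simp del: insert_iff)
        moreover have "card {u,v,w} = 3" using w uv u_def v_def by simp
        ultimately show False using cnt by simp
      qed
      ultimately show ?thesis by simp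
    qed
    show False
      using core[OF finE PP minP pP u_def[symmetric] v_def[symmetric] uv[folded u_def v_def]
          Euv Euw Evw wV w(2) w(3) du[folded u_def] dv[folded v_def] dw x] .
  qed
qed

end
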